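(* Let $k_1<k_2$ be integers with $k_1\ge 3$, and let $n$ be a positive integer. If $\nu_{k_1}(n)>0$, then $\nu_{k_2}(n+k_2-k_1)>0$.
   Context: For an integer $k\ge 3$ and a positive integer $n$, $\nu_k(n)$ denotes the number of $k$-tuples of integers $(x_1,\dots,x_k)$ with $1\le x_1\le x_2\le\dots\le x_k$ such that $x_1x_2\cdots x_k+x_1+x_2+\dots+x_k=n$. *)

theory Defs
  imports Main
begin

definition nu_tuples :: "nat \<Rightarrow> int \<Rightarrow> int list set" where
  "nu_tuples k n = {xs. length xs = k \<and> sorted xs \<and> (\<forall>x\<in>set xs. 1 \<le> x)
                        \<and> prod_list xs + sum_list xs = n}"

definition nu :: "nat \<Rightarrow> int \<Rightarrow> nat" where
  "nu k n = card (nu_tuples k n)"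

end

theory Submission
  imports Defs
begin

lemma prod_pos: "\<forall>x\<in>set xs. (1::int) \<le> x \<Longrightarrow> 1 \<le> prod_list xs"
  by (induction xs) (auto simp: mult_le_cancel_left1 order_trans)

lemma elem_le_sum: "\<forall>x\<in>set xs. (1::int) \<le> x \<Longrightarrow> y \<in> set xs \<Longrightarrow> y \<le> sum_list xs"
proof (induction xs)
  case Nil then show ?case by simp
next
  case (Cons a xs)
  have "0 \<le> sum_list xs" using Cons.prems by (intro sum_list_nonneg) auto
  then show ?case using Cons by auto
qed

lemma fin: "finite (nu_tuples k n)"
proof -
  have "nu_tuples k n \<subseteq> {xs. set xs \<subseteq> {1..n} \<and> length xs = k}"
  proof
    fix xs assume "xs \<in> nu_tuples k n"
    hence h: "length xs = k" "\<forall>x\<in>set xs. 1 \<le> x" "prod_list xs + sum_list xs = n"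
      by (auto simp: nu_tuples_def)
    have "1 \<le> prod_list xs" using prod_pos h(2) .
    moreover have "\<And>y. y \<in> set xs \<Longrightarrow> y \<le> sum_list xs" using elem_le_sum h(2) by blast
    ultimately show "xs \<in> {xs. set xs \<subseteq> {1..n} \<and> length xs = k}" using h by force
  qed
  moreover have "finite {xs. set xs \<subseteq> {1..n} \<and> length xs = k}"
    by (rule finite_lists_length_eq) simp
  ultimately show ?thesis by (rule finite_subset)
qed

theorem proposition3:
  fixes k1 k2 :: nat and n :: int
  assumes "3 \<le> k1" and "k1 < k2" and "0 < n"
    and "nu k1 n > 0"
  shows "nu k2 (n + int k2 - int k1) > 0"
proof -
  from assms(4) obtain xs where xs: "xs \<in> nu_tuples k1 n"
    unfolding nu_def by (metis card.empty ex_in_conv less_irrefl)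
  define ys where "ys = replicate (k2 - k1) (1::int) @ xs"
  have h: "length xs = k1" "sorted xs" "\<forall>x\<in>set xs. 1 \<le> x" "prod_list xs + sum_list xs = n"
    using xs by (auto simp: nu_tuples_def)
  have "sorted ys" unfolding ys_def using h(2,3) by (auto simp: sorted_append)
  moreover have "length ys = k2" using h(1) assms(2) by (simp add: ys_def)
  moreover have "\<forall>x\<in>set ys. 1 \<le> x" using h(3) by (auto simp: ys_def)
  moreover have "prod_list ys + sum_list ys = n + int k2 - int k1"
    using h(4) assms(2) by (simp add: ys_def sum_list_replicate of_nat_diff)
  ultimately have "ys \<in> nu_tuples k2 (n + int k2 - int k1)" by (simp add: nu_tuples_def)
  then show ?thesis unfolding nu_def using fin card_gt_0_iff by blast
qed

end
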